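(* Let $V$ be a finite set and $\{\eta(t),t\ge0\}$ a consistent configuration process on $\Omega$. Then for all $\eta,\xi\in\Omega$ with $1\le|\xi|<|\eta|$ and all $t\ge0$, $$\mathbb E_\eta[F(\xi,\eta(t))]=\frac{1}{|\eta|-|\xi|}\sum_{i\in V}\eta_i\,\mathbb E_{\eta-\delta_i}[F(\xi,\eta(t))].$$
   Context: $\Lambda\subseteq\mathbb N_0$, $\Omega=\{\eta\in\Lambda^V:|\eta|<\infty\}$ with $|\eta|=\sum_x\eta_x$; $\delta_z$ is the configuration with one particle at $z$. $F(\xi,\eta):=\prod_{j\in V}\binom{\eta_j}{\xi_j}$ (with $\binom{a}{b}=0$ for $b>a$). A configuration process is a particle-number-conserving Markov process on $\Omega$ with generator $\mathcal L$; $\mathbb E_\eta$ is expectation started from $\eta$. It is consistent if $[\mathcal L,\mathcal A]=0$, where $\mathcal Af(\eta)=\sum_{x\in V}\eta_xf(\eta-\delta_x)$ (terms with $\eta_x=0$ vanish). *)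

theory Defs
  imports Complex_Main
begin

text \<open>Sites V are a finite type 'v; configurations are functions 'v \<Rightarrow> nat.
  The single-site state space is Lambda (a set of naturals).\<close>

definition Omega :: "nat set \<Rightarrow> ('v \<Rightarrow> nat) set" where
  "Omega Lam = {eta. (\<forall>x. eta x \<in> Lam) \<and> finite {x. eta x \<noteq> 0}}"

definition cnt :: "('v::finite \<Rightarrow> nat) \<Rightarrow> nat" where
  "cnt eta = (\<Sum>x\<in>UNIV. eta x)"

definition delta :: "'v \<Rightarrow> ('v \<Rightarrow> nat)" where
  "delta z = (\<lambda>x. if x = z then 1 else 0)"

definition Fdual :: "('v::finite \<Rightarrow> nat) \<Rightarrow> ('v \<Rightarrow> nat) \<Rightarrow> real" where
  "Fdual xi eta = (\<Prod>j\<in>UNIV. real (eta j choose xi j))"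

definition gen :: "nat set \<Rightarrow> (('v::finite \<Rightarrow> nat) \<Rightarrow> ('v \<Rightarrow> nat) \<Rightarrow> real)
    \<Rightarrow> (('v \<Rightarrow> nat) \<Rightarrow> real) \<Rightarrow> ('v \<Rightarrow> nat) \<Rightarrow> real" where
  "gen Lam q f eta = (\<Sum>zeta\<in>{zeta\<in>Omega Lam. cnt zeta = cnt eta}. q eta zeta * (f zeta - f eta))"

definition configuration_process :: "nat set \<Rightarrow> (('v::finite \<Rightarrow> nat) \<Rightarrow> ('v \<Rightarrow> nat) \<Rightarrow> real) \<Rightarrow> bool" where
  "configuration_process Lam q \<longleftrightarrow>
     (\<forall>eta\<in>Omega Lam. \<forall>zeta\<in>Omega Lam. eta \<noteq> zeta \<longrightarrow> q eta zeta \<ge> 0)"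

definition annih :: "(('v::finite \<Rightarrow> nat) \<Rightarrow> real) \<Rightarrow> ('v \<Rightarrow> nat) \<Rightarrow> real" where
  "annih f eta = (\<Sum>x\<in>UNIV. real (eta x) * f (eta - delta x))"

definition consistent :: "nat set \<Rightarrow> (('v::finite \<Rightarrow> nat) \<Rightarrow> ('v \<Rightarrow> nat) \<Rightarrow> real) \<Rightarrow> bool" where
  "consistent Lam q \<longleftrightarrow>
     (\<forall>f. \<forall>eta\<in>Omega Lam. gen Lam q (annih f) eta = annih (gen Lam q f) eta)"

text \<open>E_eta[f(eta(t))] = (exp(t L) f)(eta); L acts on the finite level set of eta.\<close>

definition expect :: "nat set \<Rightarrow> (('v::finite \<Rightarrow> nat) \<Rightarrow> ('v \<Rightarrow> nat) \<Rightarrow> real)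
    \<Rightarrow> real \<Rightarrow> (('v \<Rightarrow> nat) \<Rightarrow> real) \<Rightarrow> ('v \<Rightarrow> nat) \<Rightarrow> real" where
  "expect Lam q t f eta = (\<Sum>n. t ^ n / fact n * ((gen Lam q ^^ n) f) eta)"

end

theory Submission
  imports Defs "HOL-Library.FuncSet"
begin

lemma coord: "real a * real ((a - 1) choose b) = (real a - real b) * real (a choose b)"
proof (cases "b \<le> a")
  case True
  have "(a - b) * (a choose b) = a * ((a - 1) choose b)" by (rule binomial_absorb_comp)
  then have "real ((a - b) * (a choose b)) = real (a * ((a - 1) choose b))" by simp
  then show ?thesis using True by (simp add: of_nat_diff)
next
  case False
  then show ?thesis by (simp add: binomial_eq_0)
qed

lemma annih_F: "annih (Fdual xi) z = (real (cnt z) - real (cnt xi)) * Fdual xi z"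
proof -
  have each: "real (z x) * (\<Prod>j\<in>UNIV. real ((z - delta x) j choose xi j))
      = (real (z x) - real (xi x)) * (\<Prod>j\<in>UNIV. real (z j choose xi j))" for x
  proof -
    have a: "(\<Prod>j\<in>UNIV. real ((z - delta x) j choose xi j))
        = real ((z x - 1) choose xi x) * (\<Prod>j\<in>UNIV - {x}. real ((z - delta x) j choose xi j))"
      by (subst prod.remove[of UNIV x]) (auto simp: delta_def)
    have b: "(\<Prod>j\<in>UNIV - {x}. real ((z - delta x) j choose xi j))
        = (\<Prod>j\<in>UNIV - {x}. real (z j choose xi j))"
      by (rule prod.cong) (auto simp: delta_def)
    have c: "(\<Prod>j\<in>UNIV. real (z j choose xi j))
        = real (z x choose xi x) * (\<Prod>j\<in>UNIV - {x}. real (z j choose xi j))"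
      by (subst prod.remove[of UNIV x]) auto
    show ?thesis unfolding a b c
      by (simp only: mult.assoc[symmetric] coord)
  qed
  have "annih (Fdual xi) z = (\<Sum>x\<in>UNIV. (real (z x) - real (xi x)) * (\<Prod>j\<in>UNIV. real (z j choose xi j)))"
    unfolding annih_def Fdual_def by (rule sum.cong[OF refl]) (rule each)
  then show ?thesis
    unfolding Fdual_def cnt_def
    by (simp add: sum_distrib_right[symmetric] sum_subtractf)
qed

lemma gen_level: "gen Lam q (\<lambda>z. h (cnt z) * f z) e = h (cnt e) * gen Lam q f e"
  unfolding gen_def by (auto simp: sum_distrib_left algebra_simps intro!: sum.cong)

lemma pow_level: "(gen Lam q ^^ n) (\<lambda>z. h (cnt z) * f z) = (\<lambda>z. h (cnt z) * (gen Lam q ^^ n) f z)"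
  by (induction n) (auto simp: gen_level)

lemma gen_cong: "(\<forall>z\<in>Omega Lam. g z = g' z) \<Longrightarrow> gen Lam q g e = gen Lam q g' e \<or> e \<notin> Omega Lam"
  unfolding gen_def by (auto intro!: sum.cong)

lemma pow_annih:
  assumes "consistent Lam q"
  shows "e \<in> Omega Lam \<Longrightarrow> (gen Lam q ^^ n) (annih f) e = annih ((gen Lam q ^^ n) f) e"
proof (induction n arbitrary: e)
  case 0
  then show ?case by simp
next
  case (Suc n)
  have "(gen Lam q ^^ Suc n) (annih f) e = gen Lam q ((gen Lam q ^^ n) (annih f)) e" by simp
  also have "\<dots> = gen Lam q (annih ((gen Lam q ^^ n) f)) e"
    using gen_cong[of Lam "(gen Lam q ^^ n) (annih f)" "annih ((gen Lam q ^^ n) f)" q e] Suc by auto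
  also have "\<dots> = annih (gen Lam q ((gen Lam q ^^ n) f)) e"
    using assms Suc.prems unfolding consistent_def by blast
  finally show ?case by simp
qed

lemma finite_level: "finite {z\<in>Omega Lam. cnt z = (c::nat)} "
proof -
  have "{z\<in>Omega Lam. cnt z = c} \<subseteq> Pi\<^sub>E (UNIV::'a::finite set) (\<lambda>_. {..c})"
  proof
    fix z :: "'a \<Rightarrow> nat" assume "z \<in> {z\<in>Omega Lam. cnt z = c}"
    then have "cnt z = c" by simp
    moreover have "z x \<le> cnt z" for x unfolding cnt_def by (rule member_le_sum) auto
    ultimately show "z \<in> Pi\<^sub>E UNIV (\<lambda>_. {..c})" by (auto simp: PiE_UNIV_domain)
  qed
  moreover have "finite (Pi\<^sub>E (UNIV::'a set) (\<lambda>_. {..c}))" by (rule finite_PiE) auto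
  ultimately show ?thesis by (rule finite_subset)
qed

lemma summable_expect:
  fixes q :: "('v::finite \<Rightarrow> nat) \<Rightarrow> ('v \<Rightarrow> nat) \<Rightarrow> real" and e :: "'v \<Rightarrow> nat"
  shows "summable (\<lambda>n. t ^ n / fact n * (gen Lam q ^^ n) f e)"
proof -
  define S where "S = {z\<in>(Omega Lam :: ('v \<Rightarrow> nat) set). cnt z = cnt e}"
  define T where "T = insert e S"
  have finS: "finite S" unfolding S_def by (rule finite_level)
  have finT: "finite T" unfolding T_def using finS by simp
  have cntT: "z \<in> T \<Longrightarrow> cnt z = cnt e" for z unfolding T_def S_def by auto
  define A where "A n = (\<Sum>z\<in>T. \<bar>(gen Lam q ^^ n) f z\<bar>)" for n
  define K where "K = 2 * (\<Sum>z\<in>T. \<Sum>w\<in>S. \<bar>q z w\<bar>)"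
  have K0: "K \<ge> 0" unfolding K_def by (auto intro!: sum_nonneg)
  have step: "(\<Sum>z\<in>T. \<bar>gen Lam q g z\<bar>) \<le> K * (\<Sum>u\<in>T. \<bar>g u\<bar>)" for g
  proof -
    define B where "B = (\<Sum>u\<in>T. \<bar>g u\<bar>)"
    have gB: "u \<in> T \<Longrightarrow> \<bar>g u\<bar> \<le> B" for u
      unfolding B_def by (rule member_le_sum) (use finT in auto)
    have one: "\<bar>gen Lam q g z\<bar> \<le> (\<Sum>w\<in>S. \<bar>q z w\<bar>) * (2 * B)" if z: "z \<in> T" for z
    proof -
      have "gen Lam q g z = (\<Sum>w\<in>S. q z w * (g w - g z))"
        unfolding gen_def S_def using cntT[OF z] by simp
      also have "\<bar>\<dots>\<bar> \<le> (\<Sum>w\<in>S. \<bar>q z w * (g w - g z)\<bar>)" by (rule sum_abs)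
      also have "\<dots> \<le> (\<Sum>w\<in>S. \<bar>q z w\<bar> * (2 * B))"
      proof (rule sum_mono)
        fix w assume w: "w \<in> S"
        have "\<bar>g w - g z\<bar> \<le> 2 * B" using gB[of w] gB[OF z] w T_def by auto
        then show "\<bar>q z w * (g w - g z)\<bar> \<le> \<bar>q z w\<bar> * (2 * B)"
          by (simp add: abs_mult mult_left_mono)
      qed
      also have "\<dots> = (\<Sum>w\<in>S. \<bar>q z w\<bar>) * (2 * B)" by (simp add: sum_distrib_right)
      finally show ?thesis .
    qed
    have "(\<Sum>z\<in>T. \<bar>gen Lam q g z\<bar>) \<le> (\<Sum>z\<in>T. (\<Sum>w\<in>S. \<bar>q z w\<bar>) * (2 * B))"
      by (rule sum_mono) (rule one)
    also have "\<dots> = (\<Sum>z\<in>T. \<Sum>w\<in>S. \<bar>q z w\<bar>) * (2 * B)" by (rule sum_distrib_right[symmetric])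
    also have "\<dots> = K * B" unfolding K_def by simp
    finally show ?thesis unfolding B_def .
  qed
  have An: "A n \<le> K ^ n * A 0" for n
  proof (induction n)
    case 0 then show ?case by simp
  next
    case (Suc n)
    have "A (Suc n) \<le> K * A n" unfolding A_def using step[of "(gen Lam q ^^ n) f"] by simp
    also have "\<dots> \<le> K * (K ^ n * A 0)" using Suc K0 by (rule mult_left_mono)
    finally show ?case by (simp add: algebra_simps)
  qed
  have eT: "e \<in> T" unfolding T_def by simp
  have bound: "norm (t ^ n / fact n * (gen Lam q ^^ n) f e) \<le> A 0 * (inverse (fact n) * (\<bar>t\<bar> * K) ^ n)" for n
  proof -
    have "\<bar>(gen Lam q ^^ n) f e\<bar> \<le> A n" unfolding A_def by (rule member_le_sum) (use finT eT in auto)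
    also have "\<dots> \<le> K ^ n * A 0" by (rule An)
    finally have h: "\<bar>(gen Lam q ^^ n) f e\<bar> \<le> K ^ n * A 0" .
    have "norm (t ^ n / fact n * (gen Lam q ^^ n) f e) = \<bar>t\<bar> ^ n / fact n * \<bar>(gen Lam q ^^ n) f e\<bar>"
      by (simp add: abs_mult power_abs)
    also have "\<dots> \<le> \<bar>t\<bar> ^ n / fact n * (K ^ n * A 0)"
      by (rule mult_left_mono[OF h]) simp
    also have "\<dots> = A 0 * (inverse (fact n) * (\<bar>t\<bar> * K) ^ n)"
      by (simp add: power_mult_distrib field_simps)
    finally show ?thesis .
  qed
  show ?thesis
    by (rule summable_comparison_test'[where N=0, OF summable_mult[OF summable_exp]]) (use bound in auto)
qed

theorem proposition3p6:
  fixes Lam :: "nat set"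
    and q :: "('v::finite \<Rightarrow> nat) \<Rightarrow> ('v \<Rightarrow> nat) \<Rightarrow> real"
    and eta xi :: "'v \<Rightarrow> nat"
    and t :: real
  assumes "\<forall>n\<in>Lam. \<forall>m\<le>n. m \<in> Lam"
    and "configuration_process Lam q"
    and "consistent Lam q"
    and "eta \<in> Omega Lam" and "xi \<in> Omega Lam"
    and "1 \<le> cnt xi" and "cnt xi < cnt eta"
    and "t \<ge> 0"
  shows "expect Lam q t (Fdual xi) eta
       = 1 / (real (cnt eta) - real (cnt xi))
         * (\<Sum>i\<in>UNIV. real (eta i) * expect Lam q t (Fdual xi) (eta - delta i))"
proof -
  define F where "F = Fdual xi"
  define c where "c = real (cnt eta) - real (cnt xi)"
  have c0: "c > 0" unfolding c_def using assms(7) by simp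
  have annF: "annih F = (\<lambda>z. (\<lambda>k. real k - real (cnt xi)) (cnt z) * F z)"
    unfolding F_def by (rule ext) (simp add: annih_F)
  have L1: "(\<Sum>n. t ^ n / fact n * (gen Lam q ^^ n) (annih F) eta) = c * expect Lam q t F eta"
  proof -
    have eq: "(\<lambda>n. t ^ n / fact n * (gen Lam q ^^ n) (annih F) eta)
        = (\<lambda>n. c * (t ^ n / fact n * (gen Lam q ^^ n) F eta))"
    proof (rule ext)
      fix n
      have "(gen Lam q ^^ n) (annih F) eta = (real (cnt eta) - real (cnt xi)) * (gen Lam q ^^ n) F eta"
        unfolding annF pow_level[where h="\<lambda>k. real k - real (cnt xi)" and f=F] by simp
      then show "t ^ n / fact n * (gen Lam q ^^ n) (annih F) eta = c * (t ^ n / fact n * (gen Lam q ^^ n) F eta)"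
        unfolding c_def by simp
    qed
    show ?thesis unfolding expect_def eq by (rule suminf_mult[OF summable_expect])
  qed
  have L2: "(\<Sum>n. t ^ n / fact n * (gen Lam q ^^ n) (annih F) eta)
      = (\<Sum>i\<in>UNIV. real (eta i) * expect Lam q t F (eta - delta i))"
  proof -
    have eq2: "(\<lambda>n. t ^ n / fact n * (gen Lam q ^^ n) (annih F) eta)
        = (\<lambda>n. \<Sum>i\<in>UNIV. real (eta i) * (t ^ n / fact n * (gen Lam q ^^ n) F (eta - delta i)))"
      using pow_annih[OF assms(3) assms(4)]
      by (simp add: annih_def sum_distrib_left algebra_simps)
    have "(\<Sum>n. t ^ n / fact n * (gen Lam q ^^ n) (annih F) eta)
        = (\<Sum>n. \<Sum>i\<in>UNIV. real (eta i) * (t ^ n / fact n * (gen Lam q ^^ n) F (eta - delta i)))"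
      unfolding eq2 ..
    also have "\<dots> = (\<Sum>i\<in>UNIV. \<Sum>n. real (eta i) * (t ^ n / fact n * (gen Lam q ^^ n) F (eta - delta i)))"
      using suminf_sum[of UNIV "\<lambda>i n. real (eta i) * (t ^ n / fact n * (gen Lam q ^^ n) F (eta - delta i))"]
        summable_mult[OF summable_expect[of t Lam q F]] by blast
    also have "\<dots> = (\<Sum>i\<in>UNIV. real (eta i) * expect Lam q t F (eta - delta i))"
      unfolding expect_def
      using suminf_mult[OF summable_expect[of t Lam q F]] by presburger
    finally show ?thesis .
  qed
  have "c * expect Lam q t F eta = (\<Sum>i\<in>UNIV. real (eta i) * expect Lam q t F (eta - delta i))"
    using L1 L2 by simp
  then show ?thesis unfolding F_def[symmetric] c_def[symmetric] using c0
    by (simp add: field_simps)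
qed

end
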